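(* Let $1\le k\le n-k$, $\mathfrak{g}=\mathfrak{sl}_n(\mathbb{C})$, and let $I=\{i_1<\cdots<i_k\}$ and $J=\{j_1<\cdots<j_k\}$ be distinct subsets of $\{1,\dots,n\}$ with $i_1\le j_1$; let $r=|I\cap J|$. Let $\nu$ be a dominant integral weight such that $\nu+\lambda_I$ and $\nu+\lambda_J$ are dominant integral, and let $s\ge1$. If $f_{\mathfrak{C}_p,I}(\nu)=f_{\mathfrak{C}_p,J}(\nu)$ for $2\le p\le s+1$, then there exist two lists of integers $[x_1,\dots,x_{k-r}]$ and $[y_1,\dots,y_{k-r}]$, not permutations of each other, with $\sum_{i=1}^{k-r}x_i^j=\sum_{i=1}^{k-r}y_i^j$ for $j=1,\dots,s$ (a non-trivial PTE solution of size $k-r$ and degree $s$).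
   Context: $X_{ij}=E_{ij}$ ($i\ne j$), $X_{ii}=E_{ii}-\frac1n\sum_lE_{ll}$; $\mathfrak{C}_p=\sum_{i_1,\dots,i_p=1}^nX_{i_1i_2}\cdots X_{i_pi_1}\in Z(\mathfrak{g})$. $\omega_1,\dots,\omega_{n-1}$ are fundamental weights, $\omega_0=\omega_n=0$. For a $k$-subset $I=\{i_1<\cdots<i_k\}$, $\lambda_I=\sum_{t=1}^k(\omega_{i_t}-\omega_{i_t-1})$ (the weight of $e_{i_1}\wedge\cdots\wedge e_{i_k}$ in $V_{\omega_k}=\wedge^k\mathbb{C}^n$). For a weight $\mu$, $\chi_\mu$ is the infinitesimal central character of the irreducible highest weight module $V_\mu$, and $f_{\mathfrak{C}_p,I}(\nu)=\chi_{\nu+\lambda_I}(\mathfrak{C}_p)-\chi_\nu(\mathfrak{C}_p)-\chi_{\omega_k}(\mathfrak{C}_p)$ (the eigenvalue of $M_{\omega_k,\nu}(\mathfrak{C}_p)$ on the constituent $V_{\nu+\lambda_I}$ of $V_{\omega_k}\otimes V_\nu$). *)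

theory Defs
  imports Complex_Main "HOL-Library.Multiset"
begin

text \<open>Weights of sl_n are encoded by their coordinates w.r.t. the fundamental
weights: a function mu :: nat => int, of which only the values mu 1, ..., mu (n-1) matter.\<close>

definition fund_wt :: "nat \<Rightarrow> nat \<Rightarrow> int" where
  "fund_wt k = (\<lambda>t. if t = k then 1 else 0)"

text \<open>lambda_I = sum over i in I of (omega_i - omega_(i-1)), with omega_0 = omega_n = 0:
the coefficient of omega_t (1 <= t <= n-1) is [t in I] - [t+1 in I].\<close>
definition lamI :: "nat set \<Rightarrow> nat \<Rightarrow> int" where
  "lamI I = (\<lambda>t. (if t \<in> I then 1 else 0) - (if t + 1 \<in> I then 1 else 0))"

definition wt_add :: "(nat \<Rightarrow> int) \<Rightarrow> (nat \<Rightarrow> int) \<Rightarrow> nat \<Rightarrow> int" where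
  "wt_add a b = (\<lambda>t. a t + b t)"

definition dominant :: "nat \<Rightarrow> (nat \<Rightarrow> int) \<Rightarrow> bool" where
  "dominant n mu \<longleftrightarrow> (\<forall>t\<in>{1..n-1}. mu t \<ge> 0)"

text \<open>Value of the weight mu on X_ii = E_ii - (1/n) sum_l E_ll;
omega_t(X_ii) = [i <= t] - t/n.\<close>
definition hval :: "nat \<Rightarrow> (nat \<Rightarrow> int) \<Rightarrow> nat \<Rightarrow> complex" where
  "hval n mu i = (\<Sum>t=1..n-1. of_int (mu t) *
       ((if i \<le> t then 1 else 0) - of_nat t / of_nat n))"

text \<open>A letter (a,b) stands for X_ab.  hw_coef n mu w is the coefficient of the
highest weight vector v in (X_{a1 b1} ... X_{am bm}) v, for v a highest weight vector of
weight mu.  It is computed from the leftmost letter: a diagonal letter acts by mu(X_aa),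
a lowering letter (a > b) contributes nothing to the v-component, and a raising letter
(a < b) is commuted to the right (it kills v) using
[X_ab, X_cd] = delta_bc X_ad - delta_da X_cb (valid also with diagonal X's).\<close>
primrec hw_coef_fuel :: "nat \<Rightarrow> nat \<Rightarrow> (nat \<Rightarrow> int) \<Rightarrow> (nat \<times> nat) list \<Rightarrow> complex" where
  "hw_coef_fuel 0 n mu w = (if w = [] then 1 else 0)"
| "hw_coef_fuel (Suc m) n mu w =
     (case w of [] \<Rightarrow> 1
      | (ab # u) \<Rightarrow>
         (let a = fst ab; b = snd ab in
          if a = b then hval n mu a * hw_coef_fuel m n mu u
          else if b < a then 0
          else (\<Sum>i<length u.
                  (if b = fst (u ! i)
                   then hw_coef_fuel m n mu (take i u @ [(a, snd (u ! i))] @ drop (Suc i) u)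
                   else 0)
                - (if snd (u ! i) = a
                   then hw_coef_fuel m n mu (take i u @ [(fst (u ! i), b)] @ drop (Suc i) u)
                   else 0))))"

definition hw_coef :: "nat \<Rightarrow> (nat \<Rightarrow> int) \<Rightarrow> (nat \<times> nat) list \<Rightarrow> complex" where
  "hw_coef n mu w = hw_coef_fuel (length w) n mu w"

definition cyc_word :: "nat list \<Rightarrow> (nat \<times> nat) list" where
  "cyc_word is = map (\<lambda>t. (is ! t, is ! ((t + 1) mod length is))) [0..<length is]"

text \<open>chi_mu(C_p): the scalar by which C_p acts on the highest weight module V_mu.\<close>
definition chi :: "nat \<Rightarrow> (nat \<Rightarrow> int) \<Rightarrow> nat \<Rightarrow> complex" where
  "chi n mu p = (\<Sum>is\<in>{is. length is = p \<and> set is \<subseteq> {1..n}}. hw_coef n mu (cyc_word is))"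

definition fC :: "nat \<Rightarrow> nat \<Rightarrow> nat \<Rightarrow> nat set \<Rightarrow> (nat \<Rightarrow> int) \<Rightarrow> complex" where
  "fC n k p I nu = chi n (wt_add nu (lamI I)) p - chi n nu p - chi n (fund_wt k) p"

end

theory Submission
  imports Defs "HOL-Computational_Algebra.Formal_Power_Series"
begin


primrec PS :: "nat \<Rightarrow> ((nat \<times> nat) list \<Rightarrow> complex) \<Rightarrow> nat \<Rightarrow> nat \<Rightarrow> nat \<Rightarrow> complex" where
  "PS n \<phi> c d 0 = (if c = d then \<phi> [] else 0)"
| "PS n \<phi> c d (Suc q) = (\<Sum>j=1..n. PS n (\<lambda>w. \<phi> ((c,j)#w)) j d q)"

lemma PS_add: "PS n (\<lambda>w. f w + g w) c d q = PS n f c d q + PS n g c d q"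
  by (induction q arbitrary: f g c) (auto simp: sum.distrib)

lemma PS_diff: "PS n (\<lambda>w. f w - g w) c d q = PS n f c d q - PS n g c d q"
  by (induction q arbitrary: f g c) (auto simp: sum_subtractf)

lemma PS_mult: "PS n (\<lambda>w. x * f w) c d q = x * PS n f c d q"
  by (induction q arbitrary: f c) (auto simp: sum_distrib_left)

lemma PS_zero: "PS n (\<lambda>w. 0) c d q = 0"
  by (induction q arbitrary: c) auto

lemma PS_if: "PS n (\<lambda>w. if P then f w else 0) c d q = (if P then PS n f c d q else 0)"
  by (cases P) (auto simp: PS_zero)

definition Der :: "nat \<Rightarrow> nat \<Rightarrow> ((nat \<times> nat) list \<Rightarrow> complex) \<Rightarrow> (nat \<times> nat) list \<Rightarrow> complex" where
  "Der a b \<phi> u = (\<Sum>i<length u.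
      (if b = fst (u ! i) then \<phi> (u[i := (a, snd (u ! i))]) else 0)
    - (if snd (u ! i) = a then \<phi> (u[i := (fst (u ! i), b)]) else 0))"

lemma Der_Nil: "Der a b \<phi> [] = 0" by (simp add: Der_def)

lemma Der_Cons: "Der a b \<phi> (x#u) =
   ((if b = fst x then \<phi> ((a, snd x)#u) else 0) - (if snd x = a then \<phi> ((fst x, b)#u) else 0))
   + Der a b (\<lambda>w. \<phi> (x#w)) u"
proof -
  have a: "(x # u)[Suc i := y] = x # u[i := y]" for i y by simp
  have b: "(x # u) ! Suc i = u ! i" for i by simp
  show ?thesis
    unfolding Der_def
    apply (simp only: length_Cons sum.lessThan_Suc_shift a b)
    apply simp
    done
qed

lemma Der_PS:
  assumes "a \<in> {1..n}" "b \<in> {1..n}"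
  shows "PS n (Der a b \<phi>) c d q = (if b = c then PS n \<phi> a d q else 0) - (if d = a then PS n \<phi> c b q else 0)"
  using assms
proof (induction q arbitrary: \<phi> c)
  case 0
  then show ?case by (auto simp: Der_Nil)
next
  case (Suc q)
  have e: "(\<lambda>w. Der a b \<phi> ((c, j) # w)) = (\<lambda>w.
     ((if b = c then \<phi> ((a, j)#w) else 0) - (if j = a then \<phi> ((c, b)#w) else 0))
   + Der a b (\<lambda>w. \<phi> ((c,j)#w)) w)" for j
    by (rule ext) (simp add: Der_Cons)
  have "PS n (Der a b \<phi>) c d (Suc q) = (\<Sum>j=1..n.
      ((if b = c then PS n (\<lambda>w. \<phi> ((a, j)#w)) j d q else 0)
      - (if j = a then PS n (\<lambda>w. \<phi> ((c, b)#w)) j d q else 0))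
      + ((if b = j then PS n (\<lambda>w. \<phi> ((c,j)#w)) a d q else 0)
      - (if d = a then PS n (\<lambda>w. \<phi> ((c,j)#w)) j b q else 0)))"
    by (simp add: e PS_add PS_diff PS_if Suc.IH[OF Suc.prems])
  also have "\<dots> = (if b = c then PS n \<phi> a d (Suc q) else 0)
      - PS n (\<lambda>w. \<phi> ((c, b)#w)) a d q
      + PS n (\<lambda>w. \<phi> ((c,b)#w)) a d q
      - (if d = a then PS n \<phi> c b (Suc q) else 0)"
  proof -
    have s1: "(\<Sum>j=1..n. (if b = c then PS n (\<lambda>w. \<phi> ((a, j)#w)) j d q else 0))
        = (if b = c then PS n \<phi> a d (Suc q) else 0)" by simp
    have s2: "(\<Sum>j=1..n. (if j = a then PS n (\<lambda>w. \<phi> ((c, b)#w)) j d q else 0))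
        = PS n (\<lambda>w. \<phi> ((c, b)#w)) a d q"
      using Suc.prems by (simp add: sum.delta')
    have s3: "(\<Sum>j=1..n. (if b = j then PS n (\<lambda>w. \<phi> ((c,j)#w)) a d q else 0))
        = PS n (\<lambda>w. \<phi> ((c,b)#w)) a d q"
      using Suc.prems by (simp add: sum.delta)
    have s4: "(\<Sum>j=1..n. (if d = a then PS n (\<lambda>w. \<phi> ((c,j)#w)) j b q else 0))
        = (if d = a then PS n \<phi> c b (Suc q) else 0)" by simp
    show ?thesis
      by (simp only: sum.distrib sum_subtractf s1 s2 s3 s4) (simp add: algebra_simps)
  qed
  finally show ?case by simp
qed

lemma hw_coef_Nil: "hw_coef n mu [] = 1"
  by (simp add: hw_coef_def)

lemma hw_coef_Cons: "hw_coef n mu ((a,b)#u) =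
   (if a = b then hval n mu a * hw_coef n mu u else if b < a then 0 else Der a b (hw_coef n mu) u)"
proof -
  have "\<And>i x. i < length u \<Longrightarrow> take i u @ [x] @ drop (Suc i) u = u[i := x]"
    by (simp add: upd_conv_take_nth_drop)
  then show ?thesis
    unfolding hw_coef_def Der_def
    by (auto simp: Let_def intro!: sum.cong)
qed


fun chainw :: "nat \<Rightarrow> nat list \<Rightarrow> nat \<Rightarrow> (nat \<times> nat) list" where
  "chainw c [] d = [(c,d)]"
| "chainw c (v#vs) d = (c,v) # chainw v vs d"

lemma sum_lists_Suc:
  assumes "finite S"
  shows "(\<Sum>xs\<in>{xs. length xs = Suc q \<and> set xs \<subseteq> S}. f xs)
       = (\<Sum>x\<in>S. \<Sum>xs\<in>{xs. length xs = q \<and> set xs \<subseteq> S}. f (x#xs))"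
proof -
  let ?L = "{xs. length xs = q \<and> set xs \<subseteq> S}"
  have fin: "finite ?L"
    using finite_lists_length_eq[OF assms, of q] by (simp add: conj_commute)
  have eq: "{xs. length xs = Suc q \<and> set xs \<subseteq> S} = (\<lambda>(x,xs). x#xs) ` (S \<times> ?L)"
  proof (rule set_eqI, rule iffI)
    fix ys assume "ys \<in> {xs. length xs = Suc q \<and> set xs \<subseteq> S}"
    then obtain x xs where "ys = x#xs" "length xs = q" "x \<in> S" "set xs \<subseteq> S"
      by (cases ys) auto
    then show "ys \<in> (\<lambda>(x,xs). x#xs) ` (S \<times> ?L)" by force
  qed auto
  have inj: "inj_on (\<lambda>(x,xs). x#xs) (S \<times> ?L)" by (auto simp: inj_on_def)
  show ?thesis
    unfolding eq sum.reindex[OF inj] sum.cartesian_product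
    by (simp add: case_prod_beta)
qed

lemma PS_chain:
  assumes "d \<in> {1..n}"
  shows "PS n \<phi> c d (Suc q) = (\<Sum>vs\<in>{vs. length vs = q \<and> set vs \<subseteq> {1..n}}. \<phi> (chainw c vs d))"
proof (induction q arbitrary: \<phi> c)
  case 0
  have "{vs::nat list. length vs = 0 \<and> set vs \<subseteq> {1..n}} = {[]}" by auto
  then show ?case using assms by (simp add: sum.delta' cong: if_cong)
next
  case (Suc q)
  show ?case
    by (subst PS.simps, subst Suc.IH, subst sum_lists_Suc) auto
qed

lemma map_upt_Cons0: "map f [0..<Suc m] = f 0 # map (\<lambda>i. f (Suc i)) [0..<m]"
  by (induct m) simp_all

lemma chainw_map: "chainw c vs d = map (\<lambda>t. ((c#vs)!t, (vs@[d])!t)) [0..<Suc (length vs)]"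
proof (induction vs arbitrary: c)
  case Nil
  then show ?case by simp
next
  case (Cons v vs)
  show ?case
    apply (simp only: chainw.simps Cons.IH length_Cons map_upt_Cons0[of _ "Suc (length vs)"])
    apply (simp del: upt_Suc)
    done
qed

lemma cyc_word_Cons: "cyc_word (a#rest) = chainw a rest a"
  unfolding chainw_map cyc_word_def
proof (rule map_cong)
  show "[0..<length (a#rest)] = [0..<Suc (length rest)]" by simp
next
  fix t assume "t \<in> set [0..<Suc (length rest)]"
  then have t: "t < Suc (length rest)" by auto
  show "((a # rest) ! t, (a # rest) ! ((t + 1) mod length (a # rest))) = ((a # rest) ! t, (rest @ [a]) ! t)"
  proof (cases "t < length rest")
    case True
    then show ?thesis by (simp add: nth_append)
  next
    case False
    then have "t = length rest" using t by linarith
    then show ?thesis by simp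
  qed
qed

lemma chi_PS:
  "chi n mu (Suc q) = (\<Sum>a\<in>{1..n}. PS n (hw_coef n mu) a a (Suc q))"
proof -
  have "chi n mu (Suc q) = (\<Sum>a\<in>{1..n}. \<Sum>xs\<in>{xs. length xs = q \<and> set xs \<subseteq> {1..n}}. hw_coef n mu (cyc_word (a#xs)))"
    unfolding chi_def by (rule sum_lists_Suc) simp
  also have "\<dots> = (\<Sum>a\<in>{1..n}. PS n (hw_coef n mu) a a (Suc q))"
    by (rule sum.cong) (simp_all only: PS_chain cyc_word_Cons)
  finally show ?thesis .
qed

definition gam :: "nat \<Rightarrow> (nat \<Rightarrow> int) \<Rightarrow> nat \<Rightarrow> complex" where
  "gam n mu a = hval n mu a + of_nat (n - a)"

lemma m_rec:
  assumes "a \<in> {1..n}"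
  shows "PS n (hw_coef n mu) a a (Suc q) = gam n mu a * PS n (hw_coef n mu) a a q
          - (\<Sum>j\<in>{a<..n}. PS n (hw_coef n mu) j j q)"
proof -
  let ?m = "\<lambda>j. PS n (hw_coef n mu) j j q"
  have f: "PS n (\<lambda>w. hw_coef n mu ((a,j)#w)) j a q =
     (if j = a then hval n mu a * ?m a else 0) + (if a < j then ?m a - ?m j else 0)"
    if "j \<in> {1..n}" for j
  proof -
    consider "j = a" | "j < a" | "a < j" by linarith
    then show ?thesis
    proof cases
      case 1 then show ?thesis by (simp add: hw_coef_Cons PS_mult)
    next
      case 2 then show ?thesis by (simp add: hw_coef_Cons PS_zero)
    next
      case 3
      then have "(\<lambda>w. hw_coef n mu ((a,j)#w)) = Der a j (hw_coef n mu)"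
        by (auto simp: hw_coef_Cons)
      then show ?thesis using 3 assms that by (simp add: Der_PS)
    qed
  qed
  have "PS n (hw_coef n mu) a a (Suc q) = (\<Sum>j\<in>{1..n}.
      (if j = a then hval n mu a * ?m a else 0) + (if a < j then ?m a - ?m j else 0))"
    by (simp add: f)
  also have "\<dots> = hval n mu a * ?m a + (\<Sum>j\<in>{a<..n}. ?m a - ?m j)"
  proof -
    have "{1..n} \<inter> {j. a < j} = {a<..n}" using assms by auto
    moreover have "(\<Sum>j\<in>{1..n}. (if a < j then ?m a - ?m j else 0)) = (\<Sum>j\<in>{1..n} \<inter> {j. a < j}. ?m a - ?m j)"
      by (simp add: sum.inter_restrict)
    ultimately show ?thesis using assms
      by (simp add: sum.distrib sum.delta')
  qed
  also have "\<dots> = gam n mu a * ?m a - (\<Sum>j\<in>{a<..n}. ?m j)"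
    by (simp add: sum_subtractf gam_def algebra_simps)
  finally show ?thesis .
qed

fun ul :: "complex \<Rightarrow> (nat \<Rightarrow> complex) \<Rightarrow> nat \<Rightarrow> complex" where
  "ul g C 0 = 1"
| "ul g C (Suc q) = g * ul g C q - C q"

primrec Cl :: "complex list \<Rightarrow> nat \<Rightarrow> complex" where
  "Cl [] = (\<lambda>q. 0)"
| "Cl (g#gs) = (\<lambda>q. Cl gs q + ul g (Cl gs) q)"

lemma sum_m_Cl:
  assumes "1 \<le> a0" "a0 \<le> n + 1"
  shows "(\<Sum>a\<in>{a0..n}. PS n (hw_coef n mu) a a q) = Cl (map (gam n mu) [a0..<n+1]) q"
  using assms
proof (induction "n + 1 - a0" arbitrary: a0 q)
  case 0
  then have "a0 = n + 1" by simp
  then show ?case by simp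
next
  case (Suc d)
  then have le: "a0 \<le> n" by simp
  have a0: "1 \<le> a0" using Suc by simp
  have IH: "(\<Sum>a\<in>{a0+1..n}. PS n (hw_coef n mu) a a q) = Cl (map (gam n mu) [a0+1..<n+1]) q" for q
    using Suc by simp
  have u: "PS n (hw_coef n mu) a0 a0 q = ul (gam n mu a0) (Cl (map (gam n mu) [a0+1..<n+1])) q" for q
  proof (induction q)
    case 0
    then show ?case by (simp add: hw_coef_Nil)
  next
    case (Suc q)
    have "{a0<..n} = {a0+1..n}" by auto
    then have "PS n (hw_coef n mu) a0 a0 (Suc q) = gam n mu a0 * PS n (hw_coef n mu) a0 a0 q
          - (\<Sum>j\<in>{a0+1..n}. PS n (hw_coef n mu) j j q)"
      using m_rec[of a0 n mu q] le a0 by simp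
    then show ?case by (simp only: Suc.IH IH ul.simps)
  qed
  have "{a0..n} = insert a0 {a0+1..n}" using le by auto
  then have "(\<Sum>a\<in>{a0..n}. PS n (hw_coef n mu) a a q) = PS n (hw_coef n mu) a0 a0 q + (\<Sum>a\<in>{a0+1..n}. PS n (hw_coef n mu) a a q)"
    by simp
  also have "\<dots> = Cl (map (gam n mu) [a0..<n+1]) q"
    using le by (simp only: u IH upt_conv_Cons[of a0 "n+1"] list.map Cl.simps) simp
  finally show ?case .
qed

lemma chi_Cl: "chi n mu (Suc q) = Cl (map (gam n mu) [1..<n+1]) (Suc q)"
  using chi_PS sum_m_Cl[of 1 n mu "Suc q"] by simp


definition FF :: "complex list \<Rightarrow> complex fps" where
  "FF gs = Abs_fps (\<lambda>k. if k = 0 then 0 else Cl gs (k - 1))"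

definition UU :: "complex \<Rightarrow> complex list \<Rightarrow> complex fps" where
  "UU g gs = Abs_fps (\<lambda>k. if k = 0 then 0 else ul g (Cl gs) (k - 1))"

definition QQ :: "complex list \<Rightarrow> complex fps" where
  "QQ gs = prod_list (map (\<lambda>g. 1 - fps_const g * fps_X) gs)"

definition LL :: "complex \<Rightarrow> complex fps" where
  "LL g = Abs_fps (\<lambda>m. - (g ^ (m + 1)))"

definition LQ :: "complex list \<Rightarrow> complex fps" where
  "LQ gs = sum_list (map LL gs)"

lemma FF_Cons: "FF (g#gs) = FF gs + UU g gs"
  by (rule fps_ext) (simp add: FF_def UU_def)

lemma UU_eq: "UU g gs * (1 - fps_const g * fps_X) = fps_X * (1 - FF gs)"
proof -
  have "UU g gs * (1 - fps_const g * fps_X) = UU g gs - fps_const g * (fps_X * UU g gs)"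
    by (simp add: algebra_simps)
  also have "\<dots> = fps_X * (1 - FF gs)"
  proof (rule fps_ext)
    fix k
    show "fps_nth (UU g gs - fps_const g * (fps_X * UU g gs)) k = fps_nth (fps_X * (1 - FF gs)) k"
    proof (cases k)
      case 0 then show ?thesis by (simp add: UU_def)
    next
      case (Suc k')
      then show ?thesis
        by (cases k') (auto simp: UU_def FF_def)
    qed
  qed
  finally show ?thesis .
qed

lemma QQ_Cons: "QQ (g#gs) = (1 - fps_const g * fps_X) * QQ gs"
  by (simp add: QQ_def)

lemma main_prod: "(1 - FF gs) * QQ gs = QQ (map (\<lambda>g. g + 1) gs)"
proof (induction gs)
  case Nil
  then show ?case by (simp add: FF_def QQ_def fps_ext)
next
  case (Cons g gs)
  have "(1 - FF (g#gs)) * QQ (g#gs) = ((1 - FF gs) * (1 - fps_const g * fps_X) - UU g gs * (1 - fps_const g * fps_X)) * QQ gs"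
    by (simp add: FF_Cons QQ_Cons algebra_simps)
  also have "\<dots> = ((1 - FF gs) * (1 - fps_const g * fps_X) - fps_X * (1 - FF gs)) * QQ gs"
    by (simp only: UU_eq)
  also have "\<dots> = (1 - fps_const (g + 1) * fps_X) * ((1 - FF gs) * QQ gs)"
  proof -
    have c: "fps_const (g + 1) = fps_const g + (1::complex fps)"
      by (metis fps_const_add fps_const_1_eq_1)
    show ?thesis unfolding c by (simp add: algebra_simps)
  qed
  also have "\<dots> = QQ (map (\<lambda>g. g + 1) (g#gs))"
    by (simp add: Cons.IH QQ_Cons)
  finally show ?case .
qed

lemma LL_eq: "(1 - fps_const g * fps_X) * LL g = - fps_const g"
proof -
  have "(1 - fps_const g * fps_X) * LL g = LL g - fps_const g * (fps_X * LL g)"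
    by (simp add: algebra_simps)
  also have "\<dots> = - fps_const g"
  proof (rule fps_ext)
    fix k show "fps_nth (LL g - fps_const g * (fps_X * LL g)) k = fps_nth (- fps_const g) k"
      by (cases k) (auto simp: LL_def)
  qed
  finally show ?thesis .
qed

lemma QQ_deriv: "fps_deriv (QQ gs) = QQ gs * LQ gs"
proof (induction gs)
  case Nil
  then show ?case by (simp add: QQ_def LQ_def)
next
  case (Cons g gs)
  have "fps_deriv (QQ (g#gs)) = - fps_const g * QQ gs + (1 - fps_const g * fps_X) * (QQ gs * LQ gs)"
    by (simp add: QQ_Cons Cons.IH)
  also have "\<dots> = ((1 - fps_const g * fps_X) * LL g) * QQ gs + (1 - fps_const g * fps_X) * (QQ gs * LQ gs)"
    by (simp add: LL_eq)
  also have "\<dots> = QQ (g#gs) * LQ (g#gs)"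
    by (simp add: QQ_Cons LQ_def algebra_simps)
  finally show ?case .
qed

lemma QQ_nz: "QQ gs \<noteq> 0"
proof -
  have "fps_nth (QQ gs) 0 = 1"
    by (induction gs) (auto simp: QQ_def)
  then show ?thesis by auto
qed

definition Sg :: "complex list \<Rightarrow> nat \<Rightarrow> complex" where
  "Sg gs j = sum_list (map (\<lambda>g. (g + 1) ^ j - g ^ j) gs)"

lemma LQ_diff_nth: "fps_nth (LQ gs - LQ (map (\<lambda>g. g + 1) gs)) k = Sg gs (k + 1)"
  by (induction gs) (auto simp: LQ_def Sg_def LL_def)

lemma FF_deriv: "fps_deriv (FF gs) = (1 - FF gs) * (LQ gs - LQ (map (\<lambda>g. g + 1) gs))"
proof -
  let ?F = "FF gs" and ?Q = "QQ gs" and ?R = "QQ (map (\<lambda>g. g + 1) gs)"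
  have "fps_deriv ((1 - ?F) * ?Q) = fps_deriv ?R" by (simp only: main_prod)
  then have "- fps_deriv ?F * ?Q + (1 - ?F) * (?Q * LQ gs) = ?R * LQ (map (\<lambda>g. g + 1) gs)"
    by (simp add: QQ_deriv)
  then have "- fps_deriv ?F * ?Q + (1 - ?F) * (?Q * LQ gs) = (1 - ?F) * ?Q * LQ (map (\<lambda>g. g + 1) gs)"
    by (simp only: main_prod)
  then have "?Q * (fps_deriv ?F - (1 - ?F) * (LQ gs - LQ (map (\<lambda>g. g + 1) gs))) = 0"
    by (simp add: algebra_simps)
  then show ?thesis using QQ_nz by simp
qed

lemma newton:
  "of_nat (p + 1) * Cl gs p = Sg gs (p + 1) - (\<Sum>i=0..p. fps_nth (FF gs) i * Sg gs (p - i + 1))"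
proof -
  have "fps_nth (fps_deriv (FF gs)) p = fps_nth ((1 - FF gs) * (LQ gs - LQ (map (\<lambda>g. g + 1) gs))) p"
    by (simp only: FF_deriv)
  also have "\<dots> = fps_nth (LQ gs - LQ (map (\<lambda>g. g + 1) gs)) p
      - fps_nth (FF gs * (LQ gs - LQ (map (\<lambda>g. g + 1) gs))) p"
    by (simp add: algebra_simps)
  also have "\<dots> = Sg gs (p + 1) - (\<Sum>i=0..p. fps_nth (FF gs) i * Sg gs (p - i + 1))"
    by (simp only: fps_mult_nth LQ_diff_nth)
  finally show ?thesis by (simp add: FF_def)
qed

lemma FF_nth: "fps_nth (FF gs) i = (if i = 0 then 0 else Cl gs (i - 1))"
  by (simp add: FF_def)

lemma Sg_eq:
  assumes "\<forall>q\<le>N. Cl gs q = Cl hs q"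
  shows "p \<le> N \<Longrightarrow> Sg gs (p + 1) = Sg hs (p + 1)"
proof (induction p rule: less_induct)
  case (less p)
  have "(\<Sum>i=0..p. fps_nth (FF gs) i * Sg gs (p - i + 1)) = (\<Sum>i=0..p. fps_nth (FF hs) i * Sg hs (p - i + 1))"
  proof (rule sum.cong)
    fix i assume i: "i \<in> {0..p}"
    show "fps_nth (FF gs) i * Sg gs (p - i + 1) = fps_nth (FF hs) i * Sg hs (p - i + 1)"
    proof (cases i)
      case 0 then show ?thesis by (simp add: FF_nth)
    next
      case (Suc i')
      then have "Sg gs (p - i + 1) = Sg hs (p - i + 1)"
        using less i by (intro less.IH) auto
      moreover have "Cl gs i' = Cl hs i'" using assms Suc i less by auto
      ultimately show ?thesis using Suc by (simp add: FF_nth)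
    qed
  qed simp
  moreover have "Cl gs p = Cl hs p" using assms less by auto
  ultimately show ?case using newton[of p gs] newton[of p hs]
    by (metis diff_eq_eq)
qed

lemma Cl_0: "Cl gs 0 = of_nat (length gs)"
  by (induction gs) auto

lemma Cl_1: "length gs = length hs \<Longrightarrow> Cl gs 1 - Cl hs 1 = sum_list gs - sum_list hs"
proof (induction gs hs rule: list_induct2)
  case Nil
  then show ?case by simp
next
  case (Cons x xs y ys)
  then show ?case by (simp add: Cl_0 algebra_simps)
qed


lemma tri:
  fixes PA PB :: "nat \<Rightarrow> complex"
  assumes "\<forall>j\<le>N+1. (\<Sum>l<j. of_nat (j choose l) * (PA l - PB l)) = 0"
  shows "i \<le> N \<Longrightarrow> PA i = PB i"
proof (induction i rule: less_induct)
  case (less i)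
  have "(\<Sum>l<Suc i. of_nat (Suc i choose l) * (PA l - PB l)) = 0"
    using assms less.prems by auto
  moreover have "(\<Sum>l<i. of_nat (Suc i choose l) * (PA l - PB l)) = 0"
    using less by (intro sum.neutral) auto
  ultimately have "of_nat (Suc i) * (PA i - PB i) = 0"
    by simp
  moreover have "of_nat (Suc i) \<noteq> (0::complex)" by (simp only: of_nat_eq_0_iff)
  ultimately show ?case by simp
qed

definition Qf :: "nat \<Rightarrow> complex \<Rightarrow> complex" where
  "Qf j x = (x + 1) ^ j - x ^ j"

definition D2 :: "nat \<Rightarrow> complex \<Rightarrow> complex" where
  "D2 j x = Qf j (x + 1) - Qf j x"

lemma Qf_exp: "Qf j x = (\<Sum>l<j. of_nat (j choose l) * x ^ l)"
proof -
  have "(x + 1) ^ j = (\<Sum>l\<le>j. of_nat (j choose l) * x ^ l * 1 ^ (j - l))"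
    by (rule binomial_ring)
  also have "\<dots> = (\<Sum>l<j. of_nat (j choose l) * x ^ l) + x ^ j"
  proof -
    have "{..j} = insert j {..<j}" by auto
    then show ?thesis by simp
  qed
  finally show ?thesis by (simp add: Qf_def)
qed

lemma D2_exp: "D2 j x = (\<Sum>l<j. of_nat (j choose l) * Qf l x)"
proof -
  have "D2 j x = Qf j (x + 1) - Qf j x" by (simp add: D2_def)
  also have "\<dots> = (\<Sum>l<j. of_nat (j choose l) * (x + 1) ^ l) - (\<Sum>l<j. of_nat (j choose l) * x ^ l)"
    by (simp only: Qf_exp)
  also have "\<dots> = (\<Sum>l<j. of_nat (j choose l) * Qf l x)"
    by (simp add: Qf_def sum_subtractf[symmetric] right_diff_distrib)
  finally show ?thesis .
qed

lemma pow_exp: "(x + K) ^ i = (\<Sum>l\<le>i. of_nat (i choose l) * x ^ l * K ^ (i - l))"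
  for x K :: complex
  by (rule binomial_ring)

lemma PTE_core:
  fixes \<beta> :: "nat \<Rightarrow> complex"
  assumes fI: "finite I" and fJ: "finite J"
    and h: "\<forall>j\<le>s+2. (\<Sum>a\<in>I. D2 j (\<beta> a)) = (\<Sum>a\<in>J. D2 j (\<beta> a))"
  shows "i \<le> s \<Longrightarrow> (\<Sum>a\<in>I. (\<beta> a + K) ^ i) = (\<Sum>a\<in>J. (\<beta> a + K) ^ i)"
proof -
  have sw: "(\<Sum>a\<in>A. D2 j (\<beta> a)) = (\<Sum>l<j. of_nat (j choose l) * (\<Sum>a\<in>A. Qf l (\<beta> a)))" for A j
    by (simp add: D2_exp sum_distrib_left sum.swap[of _ A])
  have q: "\<And>l. l \<le> s + 1 \<Longrightarrow> (\<Sum>a\<in>I. Qf l (\<beta> a)) = (\<Sum>a\<in>J. Qf l (\<beta> a))"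
  proof (rule tri[where N = "s+1"])
    show "\<forall>j\<le>s + 1 + 1. (\<Sum>l<j. of_nat (j choose l) * ((\<Sum>a\<in>I. Qf l (\<beta> a)) - (\<Sum>a\<in>J. Qf l (\<beta> a)))) = 0"
      using h by (simp add: sw right_diff_distrib sum_subtractf)
  qed
  have sw2: "(\<Sum>a\<in>A. Qf j (\<beta> a)) = (\<Sum>l<j. of_nat (j choose l) * (\<Sum>a\<in>A. (\<beta> a) ^ l))" for A j
    by (simp add: Qf_exp sum_distrib_left sum.swap[of _ A])
  have p: "\<And>l. l \<le> s \<Longrightarrow> (\<Sum>a\<in>I. (\<beta> a) ^ l) = (\<Sum>a\<in>J. (\<beta> a) ^ l)"
  proof (rule tri[where N = "s"])
    show "\<forall>j\<le>s + 1. (\<Sum>l<j. of_nat (j choose l) * ((\<Sum>a\<in>I. (\<beta> a) ^ l) - (\<Sum>a\<in>J. (\<beta> a) ^ l))) = 0"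
      using q by (simp add: sw2[symmetric] right_diff_distrib sum_subtractf)
  qed
  assume i: "i \<le> s"
  have sw3: "(\<Sum>a\<in>A. (\<beta> a + K) ^ i) = (\<Sum>l\<le>i. of_nat (i choose l) * (\<Sum>a\<in>A. (\<beta> a) ^ l) * K ^ (i - l))" for A
    by (simp add: pow_exp sum_distrib_left sum_distrib_right sum.swap[of _ A] mult.assoc)
  show ?thesis
    unfolding sw3 using p i by (intro sum.cong) auto
qed


lemma hval_formula:
  assumes "1 \<le> a"
  shows "hval n mu a = of_int (\<Sum>t\<in>{a..<n}. mu t) - (\<Sum>t\<in>{1..<n}. of_int (mu t) * of_nat t) / of_nat n"
proof -
  have s1: "{1..n-1} = {1..<n}" by auto
  have "hval n mu a = (\<Sum>t\<in>{1..<n}. (if a \<le> t then of_int (mu t) else 0)) - (\<Sum>t\<in>{1..<n}. of_int (mu t) * of_nat t / of_nat n)"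
    unfolding hval_def s1 sum_subtractf[symmetric]
    by (rule sum.cong) (auto simp: algebra_simps)
  also have "(\<Sum>t\<in>{1..<n}. (if a \<le> t then of_int (mu t) else 0)) = (\<Sum>t\<in>{1..<n} \<inter> {t. a \<le> t}. (of_int (mu t) :: complex))"
    by (simp add: sum.inter_restrict)
  also have "{1..<n} \<inter> {t. a \<le> t} = {a..<n}" using assms by auto
  finally show ?thesis by (simp add: sum_divide_distrib)
qed

lemma abel:
  fixes f :: "nat \<Rightarrow> int"
  shows "(\<Sum>t\<in>{1..<Suc m}. int t * (f t - f (Suc t))) = (\<Sum>t\<in>{1..Suc m}. f t) - int (Suc m) * f (Suc m)"
proof (induction m)
  case 0
  then show ?case by simp
next
  case (Suc m)
  have e1: "{1..<Suc (Suc m)} = insert (Suc m) {1..<Suc m}" by auto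
  have e2: "{1..Suc (Suc m)} = insert (Suc (Suc m)) {1..Suc m}" by auto
  show ?case unfolding e1 e2 using Suc by (simp add: algebra_simps)
qed

lemma telesc:
  fixes f :: "nat \<Rightarrow> int"
  assumes "a \<le> n"
  shows "(\<Sum>t\<in>{a..<n}. f t - f (Suc t)) = f a - f n"
  using assms
proof (induction n rule: dec_induct)
  case base then show ?case by simp
next
  case (step m)
  then show ?case by simp
qed

lemma hval_wt:
  assumes I: "I \<subseteq> {1..n}" and k: "card I = k" and a: "a \<in> {1..n}"
  shows "hval n (wt_add nu (lamI I)) a = hval n nu a + (if a \<in> I then 1 else 0) - of_nat k / of_nat n"
proof -
  define ind where "ind t = (if t \<in> I then 1 else 0 :: int)" for t
  have w: "wt_add nu (lamI I) t = nu t + (ind t - ind (Suc t))" for t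
    by (simp add: wt_add_def lamI_def ind_def)
  have n: "1 \<le> n" using a by simp
  then obtain m where m: "n = Suc m" by (cases n) auto
  have A: "(\<Sum>t\<in>{a..<n}. wt_add nu (lamI I) t) = (\<Sum>t\<in>{a..<n}. nu t) + (ind a - ind n)"
    using a by (simp add: w sum.distrib telesc)
  have cardI: "(\<Sum>t\<in>{1..n}. ind t) = int k"
  proof -
    have "(\<Sum>t\<in>{1..n}. ind t) = (\<Sum>t\<in>{1..n} \<inter> I. 1)"
      unfolding ind_def by (subst sum.inter_restrict) auto
    also have "{1..n} \<inter> I = I" using I by auto
    finally show ?thesis using k by simp
  qed
  have B: "(\<Sum>t\<in>{1..<n}. of_int (wt_add nu (lamI I) t) * (of_nat t :: complex))
     = (\<Sum>t\<in>{1..<n}. of_int (nu t) * of_nat t) + of_int (int k - int n * ind n)"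
  proof -
    have "(\<Sum>t\<in>{1..<n}. of_int (wt_add nu (lamI I) t) * (of_nat t :: complex))
       = (\<Sum>t\<in>{1..<n}. of_int (nu t) * of_nat t) + of_int (\<Sum>t\<in>{1..<n}. int t * (ind t - ind (Suc t)))"
      by (simp add: w sum.distrib[symmetric] algebra_simps)
    also have "(\<Sum>t\<in>{1..<n}. int t * (ind t - ind (Suc t))) = int k - int n * ind n"
      using abel[of ind m] cardI m by simp
    finally show ?thesis .
  qed
  have nz: "(of_nat n :: complex) \<noteq> 0" using n by simp
  have a1: "1 \<le> a" using a by simp
  show ?thesis
    using a
    apply (simp only: hval_formula[OF a1] A B)
    apply (simp add: ind_def field_simps nz)
    done
qed


lemma sum_upt_set: "sum_list (map f [1..<n+1]) = (\<Sum>a\<in>{1..n}. f a)"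
proof -
  have "set [1..<n+1] = {1..n}" by auto
  then show ?thesis by (metis sum_set_upt_conv_sum_list_nat)
qed

theorem proposition6p1:
  fixes n k s :: nat and I J :: "nat set" and nu :: "nat \<Rightarrow> int"
  assumes "1 \<le> k" and "k \<le> n - k"
    and "I \<subseteq> {1..n}" and "J \<subseteq> {1..n}" and "card I = k" and "card J = k"
    and "I \<noteq> J" and "Min I \<le> Min J"
    and "dominant n nu" and "dominant n (wt_add nu (lamI I))"
    and "dominant n (wt_add nu (lamI J))"
    and "1 \<le> s"
    and "\<forall>p. 2 \<le> p \<and> p \<le> s + 1 \<longrightarrow> fC n k p I nu = fC n k p J nu"
  shows "\<exists>xs ys :: int list.
           length xs = k - card (I \<inter> J) \<and> length ys = k - card (I \<inter> J) \<and>
           mset xs \<noteq> mset ys \<and>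
           (\<forall>j\<in>{1..s}. (\<Sum>x\<leftarrow>xs. x ^ j) = (\<Sum>y\<leftarrow>ys. y ^ j))"
proof -
  note IS = assms(3) and JS = assms(4) and cI = assms(5) and cJ = assms(6)
  have finI: "finite I" using IS finite_subset by blast
  have finJ: "finite J" using JS finite_subset by blast
  have n1: "1 \<le> n" using assms(1,2) by linarith
  have nz: "(of_nat n :: complex) \<noteq> 0" using n1 by simp
  define \<beta> where "\<beta> a = hval n nu a + of_nat (n - a) - of_nat k / of_nat n" for a
  define ind where "ind (X::nat set) (a::nat) = (if a \<in> X then 1 else 0 :: complex)" for X a
  have gs_eq: "map (gam n (wt_add nu (lamI X))) [1..<n+1] = map (\<lambda>a. \<beta> a + ind X a) [1..<n+1]"
    if "X \<subseteq> {1..n}" "card X = k" for X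
  proof (rule map_cong)
    fix a assume "a \<in> set [1..<n+1]"
    then have a: "a \<in> {1..n}" by auto
    show "gam n (wt_add nu (lamI X)) a = \<beta> a + ind X a"
      unfolding gam_def \<beta>_def ind_def hval_wt[OF that a] by simp
  qed simp
  have Sg_set: "Sg (map (\<lambda>a. \<beta> a + ind X a) [1..<n+1]) j = (\<Sum>a\<in>{1..n}. Qf j (\<beta> a)) + (\<Sum>a\<in>X. D2 j (\<beta> a))"
    if "X \<subseteq> {1..n}" for X j
  proof -
    have "Sg (map (\<lambda>a. \<beta> a + ind X a) [1..<n+1]) j = (\<Sum>a\<in>{1..n}. Qf j (\<beta> a + ind X a))"
    proof -
      have "Sg (map (\<lambda>a. \<beta> a + ind X a) [1..<n+1]) j = sum_list (map (\<lambda>a. Qf j (\<beta> a + ind X a)) [1..<n+1])"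
        unfolding Sg_def map_map by (simp only: comp_def Qf_def)
      then show ?thesis by (simp only: sum_upt_set)
    qed
    also have "\<dots> = (\<Sum>a\<in>{1..n}. Qf j (\<beta> a) + (if a \<in> X then D2 j (\<beta> a) else 0))"
      by (rule sum.cong) (auto simp: ind_def D2_def)
    also have "\<dots> = (\<Sum>a\<in>{1..n}. Qf j (\<beta> a)) + (\<Sum>a\<in>{1..n} \<inter> X. D2 j (\<beta> a))"
      by (simp add: sum.distrib sum.inter_restrict)
    also have "{1..n} \<inter> X = X" using that by auto
    finally show ?thesis .
  qed
  have sl: "sum_list (map (\<lambda>a. \<beta> a + ind X a) [1..<n+1]) = (\<Sum>a\<in>{1..n}. \<beta> a) + of_nat k"
    if "X \<subseteq> {1..n}" "card X = k" for X
  proof -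
    have "sum_list (map (\<lambda>a. \<beta> a + ind X a) [1..<n+1]) = (\<Sum>a\<in>{1..n}. \<beta> a) + (\<Sum>a\<in>{1..n}. ind X a)"
      by (simp only: sum_upt_set sum.distrib)
    also have "(\<Sum>a\<in>{1..n}. ind X a) = (\<Sum>a\<in>{1..n} \<inter> X. 1)"
      unfolding ind_def by (subst sum.inter_restrict) auto
    also have "{1..n} \<inter> X = X" using that by auto
    finally show ?thesis using that by simp
  qed
  define gsI where "gsI = map (gam n (wt_add nu (lamI I))) [1..<n+1]"
  define gsJ where "gsJ = map (gam n (wt_add nu (lamI J))) [1..<n+1]"
  have Cl_eq: "\<forall>q\<le>s+1. Cl gsI q = Cl gsJ q"
  proof (intro allI impI)
    fix q assume q: "q \<le> s + 1"
    consider "q = 0" | "q = 1" | "2 \<le> q" by linarith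
    then show "Cl gsI q = Cl gsJ q"
    proof cases
      case 1 then show ?thesis by (simp add: Cl_0 gsI_def gsJ_def)
    next
      case 2
      have "Cl gsI 1 - Cl gsJ 1 = sum_list gsI - sum_list gsJ"
        by (rule Cl_1) (simp add: gsI_def gsJ_def)
      also have "\<dots> = 0"
        unfolding gsI_def gsJ_def gs_eq[OF IS cI] gs_eq[OF JS cJ] sl[OF IS cI] sl[OF JS cJ] by simp
      finally show ?thesis using 2 by simp
    next
      case 3
      then obtain q' where q': "q = Suc q'" by (cases q) auto
      have "fC n k q I nu = fC n k q J nu" using assms(13) q 3 by auto
      then have "chi n (wt_add nu (lamI I)) q = chi n (wt_add nu (lamI J)) q"
        by (simp add: fC_def)
      then show ?thesis unfolding gsI_def gsJ_def q' chi_Cl by simp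
    qed
  qed
  have D2eq: "\<forall>j\<le>s+2. (\<Sum>a\<in>I. D2 j (\<beta> a)) = (\<Sum>a\<in>J. D2 j (\<beta> a))"
  proof (intro allI impI)
    fix j assume j: "j \<le> s + 2"
    have "Sg gsI j = Sg gsJ j"
    proof (cases j)
      case 0 then show ?thesis by (simp add: Sg_def)
    next
      case (Suc p)
      then show ?thesis using Sg_eq[OF Cl_eq, of p] j by simp
    qed
    then show "(\<Sum>a\<in>I. D2 j (\<beta> a)) = (\<Sum>a\<in>J. D2 j (\<beta> a))"
      unfolding gsI_def gsJ_def gs_eq[OF IS cI] gs_eq[OF JS cJ] Sg_set[OF IS] Sg_set[OF JS] by simp
  qed
  define K where "K = of_nat k / of_nat n + (\<Sum>t\<in>{1..<n}. of_int (nu t) * of_nat t) / (of_nat n :: complex)"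
  define y where "y a = (\<Sum>t\<in>{a..<n}. nu t) + int (n - a)" for a
  have \<beta>y: "\<beta> a + K = of_int (y a)" if "a \<in> {1..n}" for a
  proof -
    have "1 \<le> a" using that by simp
    then show ?thesis unfolding \<beta>_def K_def y_def hval_formula[OF \<open>1 \<le> a\<close>]
      by (simp add: field_simps nz)
  qed
  have pw: "(\<Sum>a\<in>I. y a ^ i) = (\<Sum>a\<in>J. y a ^ i)" if i: "i \<le> s" for i
  proof -
    have "(\<Sum>a\<in>I. (\<beta> a + K) ^ i) = (\<Sum>a\<in>J. (\<beta> a + K) ^ i)"
      by (rule PTE_core[OF finI finJ D2eq i])
    moreover have "(\<Sum>a\<in>X. (\<beta> a + K) ^ i) = of_int (\<Sum>a\<in>X. y a ^ i)" if "X \<subseteq> {1..n}" for X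
      using that by (simp add: \<beta>y subset_iff)
    ultimately show ?thesis using IS JS by (metis of_int_eq_iff)
  qed
  have pw2: "(\<Sum>a\<in>I-J. y a ^ i) = (\<Sum>a\<in>J-I. y a ^ i)" if i: "i \<le> s" for i
  proof -
    have "(\<Sum>a\<in>I. y a ^ i) = (\<Sum>a\<in>I \<inter> J. y a ^ i) + (\<Sum>a\<in>I-J. y a ^ i)"
      by (rule sum.Int_Diff[OF finI])
    moreover have "(\<Sum>a\<in>J. y a ^ i) = (\<Sum>a\<in>J \<inter> I. y a ^ i) + (\<Sum>a\<in>J-I. y a ^ i)"
      by (rule sum.Int_Diff[OF finJ])
    ultimately show ?thesis using pw[OF i] by (simp add: Int_commute)
  qed
  have mono: "y b < y a" if ab: "a < b" "a \<in> {1..n}" "b \<in> {1..n}" for a b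
  proof -
    have "(\<Sum>t\<in>{a..<n}. nu t) = (\<Sum>t\<in>{a..<b}. nu t) + (\<Sum>t\<in>{b..<n}. nu t)"
      using ab by (simp add: sum.atLeastLessThan_concat)
    moreover have "0 \<le> (\<Sum>t\<in>{a..<b}. nu t)"
    proof (rule sum_nonneg)
      fix t assume "t \<in> {a..<b}"
      then have "t \<in> {1..n-1}" using ab by auto
      then show "0 \<le> nu t" using assms(9) by (simp add: dominant_def)
    qed
    ultimately show ?thesis using ab unfolding y_def by simp
  qed
  have inj: "inj_on y {1..n}"
  proof (rule inj_onI)
    fix a b assume "a \<in> {1..n}" "b \<in> {1..n}" "y a = y b"
    then show "a = b" using mono[of a b] mono[of b a] by (cases a b rule: linorder_cases) auto
  qed
  define xs where "xs = map y (sorted_list_of_set (I - J))"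
  define ys where "ys = map y (sorted_list_of_set (J - I))"
  have lx: "length xs = k - card (I \<inter> J)"
    unfolding xs_def using finI cI by (simp add: card_Diff_subset_Int)
  have ly: "length ys = k - card (I \<inter> J)"
    unfolding ys_def using finJ cJ by (simp add: card_Diff_subset_Int Int_commute)
  have ne: "I - J \<noteq> {}"
  proof
    assume "I - J = {}"
    then have "I \<subseteq> J" by auto
    then have "I = J" using card_subset_eq[OF finJ] cI cJ by simp
    then show False using assms(7) by simp
  qed
  have ms: "mset xs \<noteq> mset ys"
  proof
    assume "mset xs = mset ys"
    then have "set xs = set ys" by (metis set_mset_mset)
    obtain a where a: "a \<in> I - J" using ne by auto
    then have "y a \<in> set xs" unfolding xs_def using finI by simp
    then have "y a \<in> set ys" using \<open>set xs = set ys\<close> by simp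
    then obtain b where b: "b \<in> J - I" "y a = y b" unfolding ys_def using finJ by auto
    have "a = b" using inj b a IS JS by (auto simp: inj_on_def)
    then show False using a b by simp
  qed
  have sums: "(\<Sum>x\<leftarrow>xs. x ^ j) = (\<Sum>y\<leftarrow>ys. y ^ j)" if "j \<in> {1..s}" for j
  proof -
    have "(\<Sum>x\<leftarrow>xs. x ^ j) = (\<Sum>a\<in>I-J. y a ^ j)"
      unfolding xs_def map_map using finI
      by (simp add: sum.distinct_set_conv_list[symmetric] comp_def)
    moreover have "(\<Sum>x\<leftarrow>ys. x ^ j) = (\<Sum>a\<in>J-I. y a ^ j)"
      unfolding ys_def map_map using finJ
      by (simp add: sum.distinct_set_conv_list[symmetric] comp_def)
    ultimately show ?thesis using pw2[of j] that by simp
  qed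
  show ?thesis using lx ly ms sums by blast
qed

end
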